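(* Let $n\ge3$. For every 2-page book drawing $D$ of $K_n$ and every integer $k$ with $0\le k<n/2-1$, \[ E_{\le\le k}(D)\ge 3\binom{k+3}3 . \]
   Context: A 2-page book drawing of $K_n$: vertices on a line (spine), each edge a simple arc in one of the two closed half-planes bounded by the spine; one may take the vertices to be $(1,0),\dots,(n,0)$ and non-spine edges to be semicircles, giving a good drawing. In a good drawing, for distinct vertices $p,q,r$, $r$ is on the left (right) of $\overrightarrow{pq}$ if the triangle formed by edges $pq,qr,rp$ traced in order $p,q,r$ is oriented counterclockwise (clockwise). An edge $pq$ is a $k$-edge if exactly $k$ of the other $n-2$ vertices lie on one side of it (so also an $(n-2-k)$-edge); each edge is a $k$-edge for a unique $0\le k\le\lfloor n/2\rfloor-1$, and $E_k(D)$ counts edges with that index. $E_{\le k}(D)=\sum_{j=0}^kE_j(D)$ and $E_{\le\le k}(D)=\sum_{j=0}^kE_{\le j}(D)=\sum_{i=0}^k(k+1-i)E_i(D)$. *)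

theory Defs
  imports Complex_Main
begin

(* A 2-page book drawing of K_n with vertices 0,...,n-1 placed in this order on the
   spine (the real axis), each edge {i,j} with i<j drawn as a semicircle in the upper
   page (page i j = True) or in the lower page (page i j = False).  Only the values
   page i j with i < j are relevant.  (Edges between consecutive vertices may also be
   drawn on the spine; this never affects any triangle orientation.) *)
type_synonym book2_drawing = "nat \<Rightarrow> nat \<Rightarrow> bool"

(* Orientation of the triangle p,q,r (distinct vertices) traced in order p,q,r:
   for a<b<c, the triangle a->b->c->a is counterclockwise iff the edge ac lies in the
   upper page; cyclic rotations preserve, transpositions reverse the orientation. *)
definition ccw :: "book2_drawing \<Rightarrow> nat \<Rightarrow> nat \<Rightarrow> nat \<Rightarrow> bool" where
  "ccw D p q r =
     (let a = min p (min q r); c = max p (max q r)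
      in D a c = ((p < q \<and> q < r) \<or> (q < r \<and> r < p) \<or> (r < p \<and> p < q)))"

definition left_count :: "nat \<Rightarrow> book2_drawing \<Rightarrow> nat \<Rightarrow> nat \<Rightarrow> nat" where
  "left_count n D p q = card {r \<in> {0..<n} - {p, q}. ccw D p q r}"

definition edge_index :: "nat \<Rightarrow> book2_drawing \<Rightarrow> nat \<Rightarrow> nat \<Rightarrow> nat" where
  "edge_index n D p q = min (left_count n D p q) (n - 2 - left_count n D p q)"

definition E :: "nat \<Rightarrow> book2_drawing \<Rightarrow> nat \<Rightarrow> nat" where
  "E n D k = card {(p, q). p < q \<and> q < n \<and> edge_index n D p q = k}"

definition E_le :: "nat \<Rightarrow> book2_drawing \<Rightarrow> nat \<Rightarrow> nat" where
  "E_le n D k = (\<Sum>j\<le>k. E n D j)"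

definition E_le_le :: "nat \<Rightarrow> book2_drawing \<Rightarrow> nat \<Rightarrow> nat" where
  "E_le_le n D k = (\<Sum>j\<le>k. E_le n D j)"

end

theory Submission
  imports Defs
begin


lemma ccw_swap:
  assumes "p \<noteq> q" "q \<noteq> r" "p \<noteq> r"
  shows "ccw D q p r = (\<not> ccw D p q r)"
proof -
  have a: "min q (min p r) = min p (min q r)" "max q (max p r) = max p (max q r)"
    by (simp_all add: min.left_commute max.left_commute)
  show ?thesis unfolding ccw_def Let_def a using assms
    by (cases "p < q"; cases "q < r"; cases "p < r"; auto)
qed

lemma ccw_lo: "s < w \<Longrightarrow> w < r \<Longrightarrow> ccw D s w r = D s r"
  unfolding ccw_def Let_def by (simp add: min_def max_def)

lemma ccw_mid: "s < r \<Longrightarrow> r < w \<Longrightarrow> ccw D s w r = (\<not> D s w)"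
  unfolding ccw_def Let_def by (auto simp add: min_def max_def)

lemma ccw_hi: "r < x \<Longrightarrow> x < m \<Longrightarrow> ccw D x m r = D r m"
  unfolding ccw_def Let_def by (auto simp add: min_def max_def)

definition lci :: "book2_drawing \<Rightarrow> nat \<Rightarrow> nat \<Rightarrow> nat \<Rightarrow> nat \<Rightarrow> nat" where
  "lci D s t x y = card {r \<in> {s..<t} - {x,y}. ccw D x y r}"

lemma lc_lci: "left_count n D x y = lci D 0 n x y"
  by (simp add: left_count_def lci_def)

lemma lci_swap:
  assumes "x \<noteq> y" "x \<in> {s..<t}" "y \<in> {s..<t}"
  shows "lci D s t x y + lci D s t y x = t - s - 2"
proof -
  let ?S = "{s..<t} - {x,y}"
  have c: "card ?S = t - s - 2" using assms by (simp add: card_Diff_subset)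
  have e: "{r \<in> ?S. ccw D y x r} = ?S - {r \<in> ?S. ccw D x y r}"
    using ccw_swap[of x y _ D] assms by auto
  have "card {r \<in> ?S. ccw D y x r} = card ?S - card {r \<in> ?S. ccw D x y r}"
    unfolding e by (rule card_Diff_subset) auto
  moreover have "card {r \<in> ?S. ccw D x y r} \<le> card ?S" by (rule card_mono) auto
  moreover have "{y,x} = {x,y}" by auto
  ultimately show ?thesis unfolding lci_def c by (metis add_diff_inverse_nat not_le)
qed

lemma lci_lo_split:
  assumes "x \<in> {Suc s..<t}" "y \<in> {Suc s..<t}"
  shows "lci D s t x y = lci D (Suc s) t x y + (if ccw D x y s then 1 else 0)"
proof -
  have e: "{s..<t} - {x,y} = insert s ({Suc s..<t} - {x,y})" using assms by auto
  have f: "{r \<in> insert s ({Suc s..<t} - {x,y}). ccw D x y r} =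
     (if ccw D x y s then insert s {r \<in> {Suc s..<t} - {x,y}. ccw D x y r} else {r \<in> {Suc s..<t} - {x,y}. ccw D x y r})"
    by auto
  show ?thesis unfolding lci_def e f by simp
qed

lemma lci_hi_split:
  assumes "x \<in> {s..<t}" "y \<in> {s..<t}"
  shows "lci D s (Suc t) x y = lci D s t x y + (if ccw D x y t then 1 else 0)"
proof -
  have e: "{s..<Suc t} - {x,y} = insert t ({s..<t} - {x,y})" using assms by auto
  have f: "{r \<in> insert t ({s..<t} - {x,y}). ccw D x y r} =
     (if ccw D x y t then insert t {r \<in> {s..<t} - {x,y}. ccw D x y r} else {r \<in> {s..<t} - {x,y}. ccw D x y r})"
    by auto
  show ?thesis unfolding lci_def e f by simp
qed

lemma sum_inj_image:
  assumes "finite A" "inj_on f A" "\<And>a. a \<in> A \<Longrightarrow> f a < card A"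
  shows "(\<Sum>a\<in>A. g (f a)) = (\<Sum>i<card A. g i)"
proof -
  have "f ` A = {..<card A}"
    by (rule card_subset_eq) (use assms in \<open>auto simp: card_image\<close>)
  then show ?thesis using sum.reindex[OF assms(2), of g] by simp
qed

lemma inj_card_psub:
  assumes "finite U" "\<And>a. a \<in> A \<Longrightarrow> S a \<subseteq> U"
    and "\<And>a b. a \<in> A \<Longrightarrow> b \<in> A \<Longrightarrow> a < b \<Longrightarrow> S a \<subset> S b \<or> S b \<subset> S a"
  shows "inj_on (\<lambda>a. card (S a)) (A::nat set)"
proof (rule inj_onI)
  fix a b assume ab: "a \<in> A" "b \<in> A" "card (S a) = card (S b)"
  have fa: "finite (S a)" "finite (S b)" using assms(1,2) ab finite_subset by blast+
  show "a = b"
  proof (rule ccontr)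
    assume "a \<noteq> b"
    then have "a < b \<or> b < a" by arith
    then have "S a \<subset> S b \<or> S b \<subset> S a"
      using assms(3) ab by blast
    then show False using psubset_card_mono[OF fa(2), of "S a"] psubset_card_mono[OF fa(1), of "S b"] ab(3) by linarith
  qed
qed

definition lset :: "book2_drawing \<Rightarrow> nat \<Rightarrow> nat \<Rightarrow> nat \<Rightarrow> nat \<Rightarrow> nat set" where
  "lset D s t x y = {r \<in> {s..<t} - {x,y}. ccw D x y r}"

lemma lci_lset: "lci D s t x y = card (lset D s t x y)"
  by (simp add: lci_def lset_def)

lemma lset_sub: "lset D s t x y \<subseteq> {s..<t}"
  by (auto simp: lset_def)

lemma star_lo_mem:
  assumes "s < w" "w < t"
  shows "r \<in> lset D s t s w \<longleftrightarrow>
         (s < r \<and> r < t \<and> r \<noteq> w \<and> (if r < w then \<not> D s w else D s r))"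
  unfolding lset_def using assms ccw_mid[of s r w D] ccw_lo[of s w r D] by (cases "r < w") auto

lemma star_lo_inj:
  "inj_on (\<lambda>w. lci D s t s w) {s<..<t}"
proof -
  let ?S = "\<lambda>w. lset D s t s w"
  have "inj_on (\<lambda>w. card (?S w)) {s<..<t}"
  proof (rule inj_card_psub[where U="{s..<t}"])
    fix a b assume ab: "a \<in> {s<..<t}" "b \<in> {s<..<t}" "a < b"
    have ma: "\<And>r. r \<in> ?S a \<longleftrightarrow> (s < r \<and> r < t \<and> r \<noteq> a \<and> (if r < a then \<not> D s a else D s r))"
      using star_lo_mem[where s=s and w=a and t=t and D=D] ab by simp
    have mb: "\<And>r. r \<in> ?S b \<longleftrightarrow> (s < r \<and> r < t \<and> r \<noteq> b \<and> (if r < b then \<not> D s b else D s r))"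
      using star_lo_mem[where s=s and w=b and t=t and D=D] ab by simp
    show "?S a \<subset> ?S b \<or> ?S b \<subset> ?S a"
    proof (cases "D s b")
      case True
      have "?S b \<subseteq> ?S a"
      proof
        fix r assume "r \<in> ?S b"
        then have "s < r" "r < t" "b < r" "D s r" using mb True
          by (metis linorder_neqE_nat)+
        then show "r \<in> ?S a" using ma ab by simp
      qed
      moreover have "b \<in> ?S a" using ma ab True by simp
      moreover have "b \<notin> ?S b" using mb by simp
      ultimately show ?thesis by blast
    next
      case False
      have "?S a \<subseteq> ?S b"
      proof
        fix r assume r: "r \<in> ?S a"
        then have "s < r" "r < t" "r \<noteq> a" using ma by simp_all
        show "r \<in> ?S b"
        proof (cases "r < b")
          case True then show ?thesis using mb False \<open>s < r\<close> \<open>r < t\<close> by simp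
        next
          case nb: False
          then have "a < r" "b \<noteq> r \<or> b = r" using ab by auto
          then have "D s r" using ma r by (metis less_asym)
          then have "r \<noteq> b" using False by auto
          then show ?thesis using mb nb \<open>D s r\<close> \<open>s < r\<close> \<open>r < t\<close> by simp
        qed
      qed
      moreover have "a \<in> ?S b" using mb ab False by simp
      moreover have "a \<notin> ?S a" using ma by simp
      ultimately show ?thesis by blast
    qed
  qed (simp_all add: lset_sub)
  then show ?thesis unfolding lci_lset .
qed



lemma star_hi_mem:
  assumes "x < m"
  shows "r \<in> lset D 0 (Suc m) x m \<longleftrightarrow>
         (r < m \<and> r \<noteq> x \<and> (if r < x then D r m else \<not> D x m))"
  unfolding lset_def using assms ccw_mid[of x r m D] ccw_hi[of r x m D] by (cases "r < x") auto

lemma star_hi_inj: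
  "inj_on (\<lambda>x. lci D 0 (Suc m) x m) {..<m}"
proof -
  let ?S = "\<lambda>x. lset D 0 (Suc m) x m"
  have "inj_on (\<lambda>x. card (?S x)) {..<m}"
  proof (rule inj_card_psub[where U="{0..<Suc m}"])
    fix a b assume ab: "a \<in> {..<m}" "b \<in> {..<m}" "a < b"
    have ma: "\<And>r. r \<in> ?S a \<longleftrightarrow> (r < m \<and> r \<noteq> a \<and> (if r < a then D r m else \<not> D a m))"
      using star_hi_mem[where x=a and m=m and D=D] ab by simp
    have mb: "\<And>r. r \<in> ?S b \<longleftrightarrow> (r < m \<and> r \<noteq> b \<and> (if r < b then D r m else \<not> D b m))"
      using star_hi_mem[where x=b and m=m and D=D] ab by simp
    show "?S a \<subset> ?S b \<or> ?S b \<subset> ?S a"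
    proof (cases "D a m")
      case True
      have "?S a \<subseteq> ?S b"
      proof
        fix r assume "r \<in> ?S a"
        then have "r < a" "D r m" using ma True by (metis linorder_neqE_nat)+
        then show "r \<in> ?S b" using mb ab by simp
      qed
      moreover have "a \<in> ?S b" using mb ab True by simp
      moreover have "a \<notin> ?S a" using ma by simp
      ultimately show ?thesis by blast
    next
      case False
      have "?S b \<subseteq> ?S a"
      proof
        fix r assume r: "r \<in> ?S b"
        then have rm: "r < m" "r \<noteq> b" using mb by simp_all
        show "r \<in> ?S a"
        proof (cases "r < a")
          case True
          then have "r < b" using ab by simp
          then have "D r m" using mb r by simp
          then show ?thesis using ma True rm by simp
        next
          case na: False
          have "r \<noteq> a"
          proof
            assume "r = a"
            then have "D r m" using mb r ab by simp
            then show False using False \<open>r = a\<close> by simp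
          qed
          then show ?thesis using ma na False rm by simp
        qed
      qed
      moreover have "b \<in> ?S a" using ma ab False by simp
      moreover have "b \<notin> ?S b" using mb by simp
      ultimately show ?thesis by blast
    qed
  qed (simp_all add: lset_sub)
  then show ?thesis unfolding lci_lset .
qed

lemma count_le: "(\<Sum>i<N. if i \<le> k then 1 else 0::nat) = min N (Suc k)"
  by (induction N) auto

lemma count_le': "k < N \<Longrightarrow> (\<Sum>i<N. if i \<le> k then 1 else 0::nat) = Suc k"
  by (simp add: count_le)

lemma sum_rev: "(\<Sum>i<N. g (N - Suc i)) = (\<Sum>i<N. (g i::nat))"
  using sum.atLeastLessThan_rev[of g 0 N] by (simp add: lessThan_atLeast0)

lemma count_rev: "k < N \<Longrightarrow> (\<Sum>i<N. if N - Suc i \<le> k then 1 else 0::nat) = Suc k"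
  using sum_rev[of "\<lambda>i. if i \<le> k then 1 else 0::nat" N] count_le'[of k N] by simp

lemma tri: "k < N \<Longrightarrow> (\<Sum>i<N. Suc k - i) = Suc (Suc k) choose 2"
proof (induction k)
  case 0
  have "(\<Sum>i<N. Suc 0 - i) = (\<Sum>i<N. if i \<le> 0 then 1 else 0::nat)"
    by (rule sum.cong) auto
  then show ?case using count_le'[of 0 N] 0 by (simp add: numeral_2_eq_2)
next
  case (Suc k)
  have "(\<Sum>i<N. Suc (Suc k) - i) = (\<Sum>i<N. (Suc k - i) + (if i \<le> Suc k then 1 else 0::nat))"
    by (rule sum.cong) auto
  also have "\<dots> = (\<Sum>i<N. Suc k - i) + (\<Sum>i<N. if i \<le> Suc k then 1 else 0::nat)"
    by (simp add: sum.distrib)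
  also have "\<dots> = (Suc (Suc k) choose 2) + Suc (Suc k)"
    using Suc count_le'[of "Suc k" N] by simp
  finally show ?case by (simp add: numeral_2_eq_2)
qed

lemma tri_rev: "k < N \<Longrightarrow> (\<Sum>i<N. Suc k - (N - Suc i)) = Suc (Suc k) choose 2"
  using sum_rev[of "\<lambda>i. Suc k - i" N] tri[of k N] by simp



definition Up :: "nat \<Rightarrow> nat \<Rightarrow> (nat \<times> nat) set" where
  "Up s t = {(p,q). s \<le> p \<and> p < q \<and> q < t}"

lemma finite_Up: "finite (Up s t)"
  by (rule finite_subset[of _ "{s..<t} \<times> {s..<t}"]) (auto simp: Up_def)

lemma Up_split: "Up s t = (\<lambda>w. (s,w)) ` {s<..<t} \<union> Up (Suc s) t"
  by (auto simp: Up_def)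

lemma Up_split_disj: "(\<lambda>w. (s,w)) ` {s<..<t} \<inter> Up (Suc s) t = {}"
  by (auto simp: Up_def)

definition cterm :: "book2_drawing \<Rightarrow> nat \<Rightarrow> nat \<Rightarrow> nat \<Rightarrow> nat \<Rightarrow> nat \<Rightarrow> nat" where
  "cterm D s t k p q = (if lci D s t p q \<le> k \<and> \<not> ccw D p q t then 1 else 0)
                     + (if lci D s t q p \<le> k \<and> ccw D p q t then 1 else 0)"

definition Cnt :: "book2_drawing \<Rightarrow> nat \<Rightarrow> nat \<Rightarrow> nat \<Rightarrow> nat" where
  "Cnt D s t k = (\<Sum>(p,q)\<in>Up s t. cterm D s t k p q)"

lemma lci_le: "x \<noteq> y \<Longrightarrow> x \<in> {s..<t} \<Longrightarrow> y \<in> {s..<t} \<Longrightarrow> lci D s t x y \<le> t - s - 2"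
  using lci_swap[of x y s t D] by simp

lemma star_lo_count:
  assumes "k + 2 \<le> t - s"
  shows "(\<Sum>w\<in>{s<..<t}. cterm D s t k s w) = Suc k"
proof -
  let ?N = "t - s - 1"
  define g where "g i = (if D s t then (if ?N - Suc i \<le> k then 1 else 0) else (if i \<le> k then 1 else 0::nat))" for i
  have cA: "card {s<..<t} = ?N" by simp
  have eq: "cterm D s t k s w = g (lci D s t s w)" if w: "w \<in> {s<..<t}" for w
  proof -
    have "lci D s t s w + lci D s t w s = t - s - 2" using w by (intro lci_swap) auto
    moreover have "ccw D s w t = D s t" using w by (intro ccw_lo) auto
    ultimately show ?thesis unfolding cterm_def g_def by auto
  qed
  have "(\<Sum>w\<in>{s<..<t}. cterm D s t k s w) = (\<Sum>w\<in>{s<..<t}. g (lci D s t s w))"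
    using eq by (rule sum.cong[OF refl])
  also have "\<dots> = (\<Sum>i<?N. g i)"
  proof (subst cA[symmetric], rule sum_inj_image)
    show "inj_on (lci D s t s) {s<..<t}" by (rule star_lo_inj)
    fix w assume w: "w \<in> {s<..<t}"
    then have "lci D s t s w \<le> t - s - 2" by (intro lci_le) auto
    then show "lci D s t s w < card {s<..<t}" using w by simp arith
  qed simp
  also have "\<dots> = Suc k"
  proof (cases "D s t")
    case True
    then have "(\<Sum>i<?N. g i) = (\<Sum>i<?N. if ?N - Suc i \<le> k then 1 else 0)" by (simp add: g_def)
    then show ?thesis using count_rev[of k ?N] assms by simp
  next
    case False
    then have "(\<Sum>i<?N. g i) = (\<Sum>i<?N. if i \<le> k then 1 else 0)" by (simp add: g_def)
    then show ?thesis using count_le'[of k ?N] assms by simp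
  qed
  finally show ?thesis .
qed

lemma cterm_mono:
  assumes "(p,q) \<in> Up (Suc s) t"
  shows "cterm D (Suc s) t k p q \<le> cterm D s t (Suc k) p q"
proof -
  have pq: "p \<in> {Suc s..<t}" "q \<in> {Suc s..<t}" using assms by (auto simp: Up_def)
  have "lci D s t p q \<le> lci D (Suc s) t p q + 1" "lci D s t q p \<le> lci D (Suc s) t q p + 1"
    using lci_lo_split[OF pq, of D] lci_lo_split[OF pq(2) pq(1), of D] by auto
  then show ?thesis unfolding cterm_def by auto
qed

lemma Cnt_split:
  "Cnt D s t k = (\<Sum>w\<in>{s<..<t}. cterm D s t k s w) + (\<Sum>(p,q)\<in>Up (Suc s) t. cterm D s t k p q)"
proof -
  have "Cnt D s t k = (\<Sum>(p,q)\<in>(\<lambda>w. (s,w)) ` {s<..<t}. cterm D s t k p q) + (\<Sum>(p,q)\<in>Up (Suc s) t. cterm D s t k p q)"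
    unfolding Cnt_def Up_split[of s t]
    by (rule sum.union_disjoint) (simp_all add: finite_Up Up_split_disj)
  also have "(\<Sum>(p,q)\<in>(\<lambda>w. (s,w)) ` {s<..<t}. cterm D s t k p q) = (\<Sum>w\<in>{s<..<t}. cterm D s t k s w)"
    by (subst sum.reindex) (auto simp: inj_on_def)
  finally show ?thesis .
qed

lemma Cnt_bound: "k + 2 \<le> t - s \<Longrightarrow> Cnt D s t k \<ge> Suc (Suc k) choose 2"
proof (induction k arbitrary: s)
  case 0
  then show ?case using Cnt_split[of D s t 0] star_lo_count[of 0 t s D] by (simp add: numeral_2_eq_2)
next
  case (Suc k)
  have ih: "Cnt D (Suc s) t k \<ge> Suc (Suc k) choose 2" using Suc by simp
  have "Cnt D (Suc s) t k \<le> (\<Sum>(p,q)\<in>Up (Suc s) t. cterm D s t (Suc k) p q)"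
    unfolding Cnt_def by (rule sum_mono) (use cterm_mono in auto)
  then show ?case using Cnt_split[of D s t "Suc k"] star_lo_count[of "Suc k" t s D] Suc.prems ih
    by (simp add: numeral_2_eq_2)
qed



lemma card_filter_sum: "finite A \<Longrightarrow> card {e\<in>A. P e} = (\<Sum>e\<in>A. if P e then 1 else 0)"
  by (simp add: sum.inter_filter[symmetric])

abbreviation idx :: "nat \<Rightarrow> book2_drawing \<Rightarrow> nat \<times> nat \<Rightarrow> nat" where
  "idx n D e \<equiv> edge_index n D (fst e) (snd e)"

lemma E_sum: "E n D i = (\<Sum>e\<in>Up 0 n. if idx n D e = i then 1 else 0)"
proof -
  have "{(p, q). p < q \<and> q < n \<and> edge_index n D p q = i} = {e\<in>Up 0 n. idx n D e = i}"
    by (auto simp: Up_def)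
  then show ?thesis unfolding E_def by (simp add: card_filter_sum finite_Up)
qed

lemma E_le_sum: "E_le n D k = (\<Sum>e\<in>Up 0 n. if idx n D e \<le> k then 1 else 0)"
proof (induction k)
  case 0
  then show ?case by (simp add: E_le_def E_sum)
next
  case (Suc k)
  have "E_le n D (Suc k) = E_le n D k + E n D (Suc k)" by (simp add: E_le_def)
  also have "\<dots> = (\<Sum>e\<in>Up 0 n. (if idx n D e \<le> k then 1 else 0) + (if idx n D e = Suc k then 1 else 0))"
    by (simp add: Suc E_sum sum.distrib)
  also have "\<dots> = (\<Sum>e\<in>Up 0 n. if idx n D e \<le> Suc k then 1 else 0)"
    by (rule sum.cong) auto
  finally show ?case .
qed

lemma E_le_le_sum: "E_le_le n D k = (\<Sum>e\<in>Up 0 n. Suc k - idx n D e)"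
proof (induction k)
  case 0
  show ?case by (simp add: E_le_le_def E_le_sum) (rule sum.cong, auto)
next
  case (Suc k)
  have "E_le_le n D (Suc k) = E_le_le n D k + E_le n D (Suc k)" by (simp add: E_le_le_def)
  also have "\<dots> = (\<Sum>e\<in>Up 0 n. (Suc k - idx n D e) + (if idx n D e \<le> Suc k then 1 else 0))"
    by (simp add: Suc E_le_sum sum.distrib)
  also have "\<dots> = (\<Sum>e\<in>Up 0 n. Suc (Suc k) - idx n D e)"
    by (rule sum.cong) auto
  finally show ?case .
qed

definition Wt :: "book2_drawing \<Rightarrow> nat \<Rightarrow> nat \<Rightarrow> nat" where
  "Wt D n k = (\<Sum>e\<in>Up 0 n. (Suc k - lci D 0 n (fst e) (snd e)) + (Suc k - lci D 0 n (snd e) (fst e)))"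

lemma ELL: assumes "2*k+2 < n" shows "E_le_le n D k = Wt D n k"
  unfolding E_le_le_sum Wt_def
proof (rule sum.cong[OF refl])
  fix e assume e: "e \<in> Up 0 n"
  obtain p q where pq: "e = (p,q)" by fastforce
  have "lci D 0 n p q + lci D 0 n q p = n - 0 - 2" using e pq by (intro lci_swap) (auto simp: Up_def)
  then show "Suc k - idx n D e = (Suc k - lci D 0 n (fst e) (snd e)) + (Suc k - lci D 0 n (snd e) (fst e))"
    using assms unfolding pq edge_index_def lc_lci by auto
qed

lemma Up_last: "Up 0 (Suc m) = Up 0 m \<union> (\<lambda>p. (p,m)) ` {..<m}"
  by (auto simp: Up_def)

lemma edges_at_last:
  assumes "k < m"
  shows "(\<Sum>p<m. (Suc k - lci D 0 (Suc m) p m) + (Suc k - lci D 0 (Suc m) m p)) = 2 * (Suc (Suc k) choose 2)"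
proof -
  let ?f = "\<lambda>p. lci D 0 (Suc m) p m"
  have sw: "lci D 0 (Suc m) m p = m - Suc (?f p)" if "p < m" for p
    using lci_swap[of p m 0 "Suc m" D] that by simp
  have "(\<Sum>p<m. (Suc k - lci D 0 (Suc m) p m) + (Suc k - lci D 0 (Suc m) m p))
      = (\<Sum>p\<in>{..<m}. (\<lambda>i. (Suc k - i) + (Suc k - (m - Suc i))) (?f p))"
    by (rule sum.cong) (auto simp: sw)
  also have "\<dots> = (\<Sum>i<card {..<m}. (Suc k - i) + (Suc k - (m - Suc i)))"
  proof (rule sum_inj_image)
    show "inj_on ?f {..<m}" by (rule star_hi_inj)
    fix p assume p: "p \<in> {..<m}"
    then have "?f p \<le> Suc m - 0 - 2" by (intro lci_le) auto
    then show "?f p < card {..<m}" using p by simp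
  qed simp
  also have "\<dots> = (\<Sum>i<m. Suc k - i) + (\<Sum>i<m. Suc k - (m - Suc i))" by (simp add: sum.distrib)
  also have "\<dots> = 2 * (Suc (Suc k) choose 2)" using tri[OF assms] tri_rev[OF assms] by simp
  finally show ?thesis .
qed

lemma old_edge:
  assumes "(p,q) \<in> Up 0 m"
  shows "(Suc k - lci D 0 (Suc m) p q) + (Suc k - lci D 0 (Suc m) q p)
       = (k - lci D 0 m p q) + (k - lci D 0 m q p) + cterm D 0 m k p q"
proof -
  have pq: "p \<in> {0..<m}" "q \<in> {0..<m}" "p \<noteq> q" "p \<noteq> m" "q \<noteq> m" using assms by (auto simp: Up_def)
  have s1: "lci D 0 (Suc m) p q = lci D 0 m p q + (if ccw D p q m then 1 else 0)"
    by (rule lci_hi_split) (use pq in auto)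
  have s2: "lci D 0 (Suc m) q p = lci D 0 m q p + (if ccw D q p m then 1 else 0)"
    by (rule lci_hi_split) (use pq in auto)
  have s3: "ccw D q p m = (\<not> ccw D p q m)" using ccw_swap[of p q m D] pq by simp
  show ?thesis unfolding s1 s2 s3 cterm_def by auto
qed

lemma Wt_rec:
  assumes "2*k+2 < Suc m"
  shows "Wt D (Suc m) k = (\<Sum>e\<in>Up 0 m. (k - lci D 0 m (fst e) (snd e)) + (k - lci D 0 m (snd e) (fst e)))
            + Cnt D 0 m k + 2 * (Suc (Suc k) choose 2)"
proof -
  let ?w = "\<lambda>e. (Suc k - lci D 0 (Suc m) (fst e) (snd e)) + (Suc k - lci D 0 (Suc m) (snd e) (fst e))"
  have "Wt D (Suc m) k = (\<Sum>e\<in>Up 0 m. ?w e) + (\<Sum>e\<in>(\<lambda>p. (p,m)) ` {..<m}. ?w e)"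
    unfolding Wt_def Up_last by (rule sum.union_disjoint) (simp_all add: finite_Up, auto simp: Up_def)
  also have "(\<Sum>e\<in>(\<lambda>p. (p,m)) ` {..<m}. ?w e) = (\<Sum>p<m. ?w (p,m))"
    by (subst sum.reindex) (auto simp: inj_on_def)
  also have "\<dots> = 2 * (Suc (Suc k) choose 2)" using edges_at_last[of k m D] assms by simp
  also have "(\<Sum>e\<in>Up 0 m. ?w e) = (\<Sum>e\<in>Up 0 m. ((k - lci D 0 m (fst e) (snd e)) + (k - lci D 0 m (snd e) (fst e))) + cterm D 0 m k (fst e) (snd e))"
    by (rule sum.cong[OF refl]) (use old_edge in force)
  also have "\<dots> = (\<Sum>e\<in>Up 0 m. (k - lci D 0 m (fst e) (snd e)) + (k - lci D 0 m (snd e) (fst e))) + Cnt D 0 m k"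
    unfolding Cnt_def by (simp add: sum.distrib case_prod_beta')
  finally show ?thesis .
qed

lemma main: "2*k+2 < n \<Longrightarrow> E_le_le n D k \<ge> 3 * ((k + 3) choose 3)"
proof (induction k arbitrary: n)
  case 0
  then obtain m where m: "n = Suc m" by (cases n) auto
  have "Cnt D 0 m 0 \<ge> Suc (Suc 0) choose 2" by (rule Cnt_bound) (use 0 m in simp)
  then show ?case using Wt_rec[of 0 m D] ELL[of 0 n D] 0 m by (simp add: numeral_2_eq_2 numeral_3_eq_3)
next
  case (Suc k)
  then obtain m where m: "n = Suc m" by (cases n) auto
  have c: "Cnt D 0 m (Suc k) \<ge> Suc (Suc (Suc k)) choose 2" by (rule Cnt_bound) (use Suc.prems m in simp)
  have ih: "E_le_le m D k \<ge> 3 * ((k + 3) choose 3)" by (rule Suc.IH) (use Suc.prems m in simp)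
  have "E_le_le m D k = Wt D m k" by (rule ELL) (use Suc.prems m in simp)
  then have w: "(\<Sum>e\<in>Up 0 m. (Suc k - lci D 0 m (fst e) (snd e)) + (Suc k - lci D 0 m (snd e) (fst e))) \<ge> 3 * ((k + 3) choose 3)"
    using ih unfolding Wt_def by simp
  have "E_le_le n D (Suc k) = Wt D n (Suc k)" by (rule ELL) (use Suc.prems in simp)
  then have "E_le_le n D (Suc k) \<ge> 3 * ((k + 3) choose 3) + (Suc (Suc (Suc k)) choose 2) + 2 * (Suc (Suc (Suc k)) choose 2)"
    using Wt_rec[of "Suc k" m D] Suc.prems m w c by simp
  moreover have "(Suc k + 3) choose 3 = ((k + 3) choose 3) + (Suc (Suc (Suc k)) choose 2)"
    by (simp add: numeral_3_eq_3 numeral_2_eq_2)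
  ultimately show ?case by simp
qed


theorem theorem6:
  fixes n k :: nat and D :: book2_drawing
  assumes "n \<ge> 3"
    and "real k < real n / 2 - 1"
  shows "E_le_le n D k \<ge> 3 * ((k + 3) choose 3)"
proof -
  have "real (2*k+2) < real n" using assms(2) by simp
  then have "2*k+2 < n" by (simp only: of_nat_less_iff)
  then show ?thesis by (rule main)
qed

end
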